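(* Let $n<0<m$ be integers. There is no family $(\Phi_j)_{n\leq j\leq m}$ of orientation preserving homeomorphisms of the circle $S^1$ such that: each $\Phi_j$ with $j<0$ commutes with each $\Phi_{j'}$ with $j'>0$; $\Phi_j$ has a fixed point if and only if $j\neq 0$; and $\Phi_1\circ\cdots\circ\Phi_m=\Phi_0=\Phi_{-1}\circ\Phi_{-2}\circ\cdots\circ\Phi_{n}$. *)

theory Defs
  imports "HOL-Analysis.Analysis"
begin

definition circle :: "complex set" where
  "circle = sphere 0 1"

definition orient_pres_homeo :: "(complex \<Rightarrow> complex) \<Rightarrow> bool" where
  "orient_pres_homeo f \<longleftrightarrow>
     (\<exists>g. homeomorphism circle circle f g) \<and>
     (\<exists>F :: real \<Rightarrow> real. continuous_on UNIV F \<and> strict_mono F \<and>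
        (\<forall>t. f (cis (2 * pi * t)) = cis (2 * pi * F t)))"

text \<open>Composition of a list of maps: compose [f1,...,fk] = f1 \<circ> ... \<circ> fk.\<close>
definition compose :: "('a \<Rightarrow> 'a) list \<Rightarrow> 'a \<Rightarrow> 'a" where
  "compose fs = foldr (\<circ>) fs id"

end

theory Submission
  imports Defs
begin

lemma cis_eq_imp:
  assumes "cis (2*pi*a) = cis (2*pi*b)" shows "\<exists>k::int. a = b + of_int k"
proof -
  have "exp (\<i> * complex_of_real (2*pi*a)) = exp (\<i> * complex_of_real (2*pi*b))"
    using assms by (simp add: cis_conv_exp)
  then obtain n where n: "\<i> * complex_of_real (2*pi*a) = \<i> * complex_of_real (2*pi*b) + complex_of_real (real_of_int (2 * n) * pi) * \<i>"
    using exp_eq by blast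
  have "2*pi*a = 2*pi*b + real_of_int (2*n) * pi"
    using arg_cong[OF n, of Im] by simp
  then have "(2*pi)*(a - b - of_int n) = 0" by (simp add: algebra_simps)
  then have "a = b + of_int n" by simp
  then show ?thesis by blast
qed

lemma cis_shift: "cis (2*pi*(a + of_int k)) = cis (2*pi*a)"
proof -
  have "cis (2*pi*(a + of_int k)) = cis (2*pi*a) * cis (2*pi* of_int k)"
    by (subst cis_mult) (simp add: distrib_left)
  also have "cis (2*pi* of_int k) = 1" by (rule cis_multiple_2pi) simp
  finally show ?thesis by simp
qed

lemma cis_shift1: "cis (2*pi*(a + 1)) = cis (2*pi*a)"
  using cis_shift[of a 1] by simp

lemma circle_cis: "z \<in> circle \<Longrightarrow> \<exists>t. z = cis (2*pi*t)"
proof -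
  assume "z \<in> circle"
  then have "norm z = 1" by (simp add: circle_def)
  then have "z \<noteq> 0" "sgn z = z" by (auto simp: sgn_div_norm)
  then have "z = cis (Arg z)" using Arg_correct by metis
  then have "z = cis (2*pi*(Arg z / (2*pi)))" by simp
  then show ?thesis by blast
qed

lemma cis_in: "cis t \<in> circle" by (simp add: circle_def)

lemma shift_nat:
  fixes P :: "real \<Rightarrow> real"
  assumes "\<forall>t. P (t+1) = P t + (1::real)" shows "P (t + real k) = P t + real k"
proof (induction k)
  case 0 then show ?case by simp
next
  case (Suc k)
  have "P (t + real (Suc k)) = P ((t + real k) + 1)" by (simp add: algebra_simps)
  also have "\<dots> = P (t + real k) + 1" using assms by blast
  finally show ?case using Suc by simp
qed

lemma shift_int:
  fixes P :: "real \<Rightarrow> real"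
  assumes "\<forall>t. P (t+1) = P t + (1::real)" shows "P (t + of_int n) = P t + of_int n"
proof (cases "n \<ge> 0")
  case True
  then obtain k where "n = int k" by (metis nonneg_eq_int)
  then show ?thesis using shift_nat[OF assms, of t k] by simp
next
  case False
  then obtain k where k: "n = - int k" proof -
    have "n = - int (nat (-n))" using False by simp
    then show ?thesis using that by blast
  qed
  have "P t = P ((t - real k) + real k)" by simp
  also have "\<dots> = P (t - real k) + real k" by (rule shift_nat[OF assms])
  finally show ?thesis using k by simp
qed

lemma lift_surj:
  fixes P :: "real \<Rightarrow> real"
  assumes "\<forall>t. P (t+1) = P t + (1::real)" "continuous_on UNIV P" "strict_mono P"
  shows "surj P"
proof -
  have "y \<in> range P" for y
  proof -
    define N where "N = ceiling \<bar>y - P 0\<bar>"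
    have a: "P (0 + of_int (-N)) = P 0 - of_int N" using shift_int[OF assms(1), of 0 "-N"] by simp
    have b: "P (0 + of_int N) = P 0 + of_int N" using shift_int[OF assms(1), of 0 N] by simp
    have "\<bar>y - P 0\<bar> \<le> of_int N" unfolding N_def by linarith
    then have "P (- of_int N) \<le> y" "y \<le> P (of_int N)" "- of_int N \<le> (of_int N::real)" using a b by auto
    then obtain x where "P x = y" using IVT'[of P "- of_int N" y "of_int N"] assms(2)
      by (meson continuous_on_subset subset_UNIV)
    then show ?thesis by blast
  qed
  then show ?thesis by blast
qed

lemma lift_exists:
  assumes "orient_pres_homeo f" "z \<in> circle" "f z = z"
  shows "\<exists>P. (\<forall>t. f (cis (2*pi*t)) = cis (2*pi*P t)) \<and> strict_mono P \<and>
             (\<forall>t. P (t+1) = P t + 1) \<and> surj P \<and> (\<exists>x. P x = x)"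
proof -
  obtain g where hom: "homeomorphism circle circle f g"
    using assms(1) unfolding orient_pres_homeo_def by blast
  obtain F :: "real \<Rightarrow> real" where Fc: "continuous_on UNIV F" and Fm: "strict_mono F"
    and Fe: "\<forall>t. f (cis (2 * pi * t)) = cis (2 * pi * F t)"
    using assms(1) unfolding orient_pres_homeo_def by blast
  have inj: "x = y" if "x \<in> circle" "y \<in> circle" "f x = f y" for x y
    using hom that unfolding homeomorphism_def by metis
  have per: "F (t+1) = F t + 1" for t
  proof -
    have "cis (2*pi*F (t+1)) = cis (2*pi*F t)"
      using Fe cis_shift1[of t] by metis
    then obtain k :: int where k: "F (t+1) = F t + of_int k" using cis_eq_imp by blast
    have "F t < F (t+1)" using Fm by (simp add: strict_mono_def)
    then have k1: "k \<ge> 1" using k by simp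
    show ?thesis
    proof (rule ccontr)
      assume "F (t+1) \<noteq> F t + 1"
      then have "k \<ge> 2" using k k1 by auto
      then have "F t \<le> F t + 1" "F t + 1 \<le> F (t+1)" using k by auto
      then obtain u where s: "t \<le> u" "u \<le> t + 1" "F u = F t + 1"
        using IVT'[of F t "F t + 1" "t+1"] Fc by (meson continuous_on_subset subset_UNIV le_add_same_cancel1 zero_le_one)
      have "cis (2*pi*F u) = cis (2*pi*F t)" using s(3) cis_shift1 by simp
      then have "f (cis (2*pi*u)) = f (cis (2*pi*t))" using Fe by metis
      then have "cis (2*pi*u) = cis (2*pi*t)" using inj cis_in by blast
      then obtain j :: int where j: "u = t + of_int j" using cis_eq_imp by blast
      then have "j = 0 \<or> j = 1" using s(1,2) by auto
      then show False using j s(3) k \<open>k \<ge> 2\<close> by auto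
    qed
  qed
  obtain x where x: "z = cis (2*pi*x)" using circle_cis assms(2) by blast
  have "cis (2*pi*F x) = cis (2*pi*x)" using Fe assms(3) x by metis
  then obtain c :: int where c: "F x = x + of_int c" using cis_eq_imp by blast
  define P where "P = (\<lambda>s. F s - of_int c)"
  have P1: "\<forall>t. f (cis (2*pi*t)) = cis (2*pi*P t)"
  proof
    fix t
    have "cis (2*pi*P t) = cis (2*pi*(P t + of_int c))" by (rule cis_shift[symmetric])
    then show "f (cis (2*pi*t)) = cis (2*pi*P t)" using Fe by (simp add: P_def)
  qed
  have P2: "strict_mono P" using Fm by (simp add: strict_mono_def P_def)
  have P3: "\<forall>t. P (t+1) = P t + 1" using per by (simp add: P_def)
  have Pc: "continuous_on UNIV P" unfolding P_def by (intro continuous_intros Fc)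
  have P4: "surj P" by (rule lift_surj[OF P3 Pc P2])
  have P5: "P x = x" using c by (simp add: P_def)
  show ?thesis using P1 P2 P3 P4 P5 by blast
qed


definition invs :: "'j set \<Rightarrow> ('j \<Rightarrow> real \<Rightarrow> real) \<Rightarrow> real set \<Rightarrow> bool" where
  "invs J P X \<longleftrightarrow> closed X \<and> X \<noteq> {} \<and> (\<forall>t n. t \<in> X \<longrightarrow> t + of_int n \<in> X) \<and>
     (\<forall>j\<in>J. \<forall>t. P j t \<in> X \<longleftrightarrow> t \<in> X)"

inductive_set orb :: "('j \<Rightarrow> real \<Rightarrow> real) \<Rightarrow> 'j set \<Rightarrow> real \<Rightarrow> real set"
  for P J a where
  base: "a \<in> orb P J a"
| step: "u \<in> orb P J a \<Longrightarrow> j \<in> J \<Longrightarrow> P j u \<in> orb P J a"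

lemma fix_finite:
  fixes f :: "real \<Rightarrow> real"
  assumes "finite S" "f ` S \<subseteq> S" "strict_mono f"
  shows "\<forall>s\<in>S. f s = s"
proof (rule ccontr)
  assume "\<not> (\<forall>s\<in>S. f s = s)"
  define M where "M = {s\<in>S. f s \<noteq> s}"
  have M: "M \<noteq> {}" "finite M" using \<open>\<not> _\<close> assms(1) by (auto simp: M_def)
  define s where "s = Min M"
  have sM: "s \<in> M" using M by (simp add: s_def)
  have minim: "f t = t" if "t \<in> S" "t < s" for t
  proof (rule ccontr)
    assume "f t \<noteq> t"
    then have "t \<in> M" using that by (simp add: M_def)
    then have "s \<le> t" using M by (simp add: s_def)
    then show False using that by simp
  qed
  have inj: "inj_on f S" using assms(3) by (rule strict_mono_imp_inj_on)
  have fS: "f ` S = S" by (rule endo_inj_surj[OF assms(1,2) inj])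
  have sS: "s \<in> S" and fs: "f s \<noteq> s" using sM by (auto simp: M_def)
  show False
  proof (cases "f s < s")
    case True
    have "f s \<in> S" using assms(2) sS by blast
    then have "f (f s) = f s" using minim True by blast
    then have "f s = s" using inj sS \<open>f s \<in> S\<close> by (meson inj_onD)
    then show False using fs by simp
  next
    case False
    then have gt: "s < f s" using fs by simp
    obtain t where t: "t \<in> S" "s = f t" using fS sS by blast
    show False
    proof (cases "t < s")
      case True
      then have "f t = t" using minim t by blast
      then show False using t True by simp
    next
      case False
      then have "t \<ge> s" by simp
      then have "t > s \<or> t = s" by auto
      then show False
      proof
        assume "t > s" then have "f t > f s" using assms(3) by (simp add: strict_mono_def)
        then show False using gt t by simp
      next
        assume "t = s" then show False using t fs by simp
      qed
    qed
  qed
qed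

lemma div_step:
  fixes d u v x :: real
  assumes "0 < d" "u + d \<le> v" shows "(u - x)/d + 1 \<le> (v - x)/d"
proof -
  have "(u - x)/d + 1 = (u + d - x)/d" using assms(1) by (simp add: field_simps)
  also have "\<dots> \<le> (v - x)/d" using assms by (intro divide_right_mono) auto
  finally show ?thesis .
qed

lemma core:
  fixes P :: "'j \<Rightarrow> real \<Rightarrow> real"
  assumes hyp: "\<forall>j\<in>J. strict_mono (P j) \<and> surj (P j) \<and> (\<forall>t. P j (t+1) = P j t + 1) \<and> (\<exists>x. P j x = x)"
  and K: "invs J P K" and C: "invs J P C" and disj: "K \<inter> C = {}"
  shows "\<exists>a. \<forall>j\<in>J. P j a = a"
proof -
  have Kc: "closed K" and Kne: "K \<noteq> {}" and Kt: "\<And>t n. t \<in> K \<Longrightarrow> t + of_int n \<in> K"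
    and Ki: "\<And>j t. j \<in> J \<Longrightarrow> P j t \<in> K \<longleftrightarrow> t \<in> K" using K by (auto simp: invs_def)
  have Cc: "closed C" and Cne: "C \<noteq> {}" and Ct: "\<And>t n. t \<in> C \<Longrightarrow> t + of_int n \<in> C"
    and Ci: "\<And>j t. j \<in> J \<Longrightarrow> P j t \<in> C \<longleftrightarrow> t \<in> C" using C by (auto simp: invs_def)
  have "compact (C \<inter> {0..1})" using Cc by (simp add: closed_Int_compact)
  moreover have "(C \<inter> {0..1}) \<inter> K = {}" using disj by blast
  ultimately obtain d where d: "d > 0" "\<forall>x\<in>C \<inter> {0..1}. \<forall>y\<in>K. d \<le> dist x y"
    using separate_compact_closed Kc by metis
  have dist: "d \<le> \<bar>c - k\<bar>" if "c \<in> C" "k \<in> K" for c k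
  proof -
    define n where "n = floor c"
    have "c + of_int (-n) \<in> C" using Ct that(1) by blast
    moreover have "c + of_int (-n) \<in> {0..1}" unfolding n_def by simp linarith
    moreover have "k + of_int (-n) \<in> K" using Kt that(2) by blast
    ultimately have "d \<le> dist (c + of_int (-n)) (k + of_int (-n))" using d(2) by blast
    then show ?thesis by (simp add: dist_real_def)
  qed
  obtain y where y: "y \<in> C" using Cne by blast
  have yK: "y \<notin> K" using y disj by blast
  obtain k0 where k0: "k0 \<in> K" using Kne by blast
  define a where "a = Sup (K \<inter> {..y})"
  have ne: "K \<inter> {..y} \<noteq> {}"
  proof -
    have "k0 + of_int (- ceiling (k0 - y)) \<in> K" using Kt k0 by blast
    moreover have "k0 + of_int (- ceiling (k0 - y)) \<le> y" by simp linarith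
    ultimately show ?thesis by blast
  qed
  have bdd: "bdd_above (K \<inter> {..y})" by (rule bdd_aboveI[of _ y]) auto
  have aK: "a \<in> K \<inter> {..y}" unfolding a_def
    by (rule closed_contains_Sup[OF ne bdd]) (simp add: Kc closed_Int)
  then have ay: "a < y" using yK by (cases "a = y") auto
  have gap: "s \<notin> K" if "a < s" "s < y" for s
  proof
    assume "s \<in> K"
    then have "s \<le> a" unfolding a_def using that bdd by (intro cSup_upper) auto
    then show False using that by simp
  qed
  have comp: "u \<in> K \<and> (\<exists>c\<in>C. u < c \<and> (\<forall>s. u < s \<and> s < c \<longrightarrow> s \<notin> K))" if "u \<in> orb P J a" for u
    using that
  proof (induction rule: orb.induct)
    case base
    then show ?case using aK ay gap y by blast
  next
    case (step u j)
    then obtain c where c: "c \<in> C" "u < c" "\<forall>s. u < s \<and> s < c \<longrightarrow> s \<notin> K" by blast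
    have sm: "strict_mono (P j)" and sj: "surj (P j)" using hyp step(2) by auto
    have "P j u \<in> K" using Ki step by blast
    moreover have "P j c \<in> C" using Ci step(2) c(1) by blast
    moreover have "P j u < P j c" using sm c(2) by (simp add: strict_mono_def)
    moreover have "\<forall>s. P j u < s \<and> s < P j c \<longrightarrow> s \<notin> K"
    proof (intro allI impI)
      fix s assume s: "P j u < s \<and> s < P j c"
      obtain t where t: "s = P j t" using sj by (metis surjD)
      have "u < t" using s t sm by (metis not_less_iff_gr_or_eq strict_mono_less)
      moreover have "t < c" using s t sm by (metis not_less_iff_gr_or_eq strict_mono_less)
      ultimately have "t \<notin> K" using c(3) by blast
      then show "s \<notin> K" using Ki step(2) t by blast
    qed
    ultimately show ?case by blast
  qed
  have sep: "u + d \<le> v" if uo: "u \<in> orb P J a" and vo: "v \<in> orb P J a" and uv: "u < v" for u v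
  proof (rule ccontr)
    assume "\<not> u + d \<le> v"
    obtain c where c: "c \<in> C" "u < c" "\<forall>s. u < s \<and> s < c \<longrightarrow> s \<notin> K" using comp[OF uo] by blast
    have "d \<le> \<bar>c - u\<bar>" using dist c(1) comp[OF uo] by blast
    then have "u + d \<le> c" using c(2) by simp
    then have "v \<notin> K" using c(3) uv \<open>\<not> u + d \<le> v\<close> by auto
    then show False using comp[OF vo] by blast
  qed
  have fin: "finite (orb P J a \<inter> {x..x+1})" for x
  proof -
    define S where "S = orb P J a \<inter> {x..x+1}"
    define g where "g = (\<lambda>u. floor ((u - x) / d))"
    have "inj_on g S"
    proof (rule inj_onI)
      fix u v assume uv: "u \<in> S" "v \<in> S" "g u = g v"
      show "u = v"
      proof (rule ccontr)
        assume "u \<noteq> v"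
        then have "u < v \<or> v < u" by auto
        then show False
        proof
          assume "u < v"
          then have "u + d \<le> v" using sep uv by (auto simp: S_def)
          then have "(u - x)/d + 1 \<le> (v - x)/d" by (rule div_step[OF d(1)])
          then show False using uv(3) unfolding g_def by linarith
        next
          assume "v < u"
          then have "v + d \<le> u" using sep uv by (auto simp: S_def)
          then have "(v - x)/d + 1 \<le> (u - x)/d" by (rule div_step[OF d(1)])
          then show False using uv(3) unfolding g_def by linarith
        qed
      qed
    qed
    moreover have "g ` S \<subseteq> {0..ceiling (1/d)}"
    proof
      fix z assume "z \<in> g ` S"
      then obtain u where u: "u \<in> S" "z = g u" by blast
      have "0 \<le> (u - x)/d" "(u - x)/d \<le> 1/d" using u(1) d(1) by (auto simp: S_def divide_right_mono)
      then show "z \<in> {0..ceiling (1/d)}" using u(2) unfolding g_def by (simp; linarith)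
    qed
    then have "finite (g ` S)" using finite_subset by blast
    ultimately show ?thesis unfolding S_def[symmetric] using finite_imageD by blast
  qed
  have "\<forall>j\<in>J. P j a = a"
  proof
    fix j assume j: "j \<in> J"
    have sm: "strict_mono (P j)" and per: "\<forall>t. P j (t+1) = P j t + 1" using hyp j by auto
    obtain x0 where x0: "P j x0 = x0" using hyp j by blast
    define x where "x = x0 + of_int (floor (a - x0))"
    have px: "P j x = x" unfolding x_def using shift_int[OF per] x0 by simp
    have px1: "P j (x + 1) = x + 1" using per px by simp
    have ax: "x \<le> a" "a \<le> x + 1" unfolding x_def by linarith+
    define S where "S = orb P J a \<inter> {x..x+1}"
    have "P j ` S \<subseteq> S"
    proof
      fix z assume "z \<in> P j ` S"
      then obtain u where u: "u \<in> orb P J a" "x \<le> u" "u \<le> x+1" "z = P j u" by (auto simp: S_def)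
      have "P j x \<le> P j u" "P j u \<le> P j (x+1)" using sm u(2,3) by (auto simp: strict_mono_less_eq)
      then show "z \<in> S" using u px px1 orb.step[OF u(1) j] by (auto simp: S_def)
    qed
    moreover have "a \<in> S" using ax orb.base by (auto simp: S_def)
    ultimately show "P j a = a" using fix_finite[OF fin[of x] _ sm] unfolding S_def by blast
  qed
  then show ?thesis by blast
qed


lemma compose_fix: "(\<forall>f\<in>set fs. f w = w) \<Longrightarrow> compose fs w = w"
  by (induction fs) (auto simp: compose_def)

lemma invs_Int:
  assumes "invs J P X" "invs J P Y" "X \<inter> Y \<noteq> {}"
  shows "invs J P (X \<inter> Y)"
  using assms unfolding invs_def by (auto intro: closed_Int)

theorem propositionE:
  fixes n m :: int
  assumes "n < 0" and "0 < m"
  shows "\<not> (\<exists>\<Phi> :: int \<Rightarrow> complex \<Rightarrow> complex.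
            (\<forall>j. n \<le> j \<and> j \<le> m \<longrightarrow> orient_pres_homeo (\<Phi> j)) \<and>
            (\<forall>j j'. n \<le> j \<and> j < 0 \<and> 0 < j' \<and> j' \<le> m \<longrightarrow>
               (\<forall>z\<in>circle. \<Phi> j (\<Phi> j' z) = \<Phi> j' (\<Phi> j z))) \<and>
            (\<forall>j. n \<le> j \<and> j \<le> m \<longrightarrow> ((\<exists>z\<in>circle. \<Phi> j z = z) \<longleftrightarrow> j \<noteq> 0)) \<and>
            (\<forall>z\<in>circle. compose (map \<Phi> [1..m]) z = \<Phi> 0 z) \<and>
            (\<forall>z\<in>circle. \<Phi> 0 z = compose (map \<Phi> (rev [n..-1])) z))"
proof
  assume "\<exists>\<Phi> :: int \<Rightarrow> complex \<Rightarrow> complex.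
            (\<forall>j. n \<le> j \<and> j \<le> m \<longrightarrow> orient_pres_homeo (\<Phi> j)) \<and>
            (\<forall>j j'. n \<le> j \<and> j < 0 \<and> 0 < j' \<and> j' \<le> m \<longrightarrow>
               (\<forall>z\<in>circle. \<Phi> j (\<Phi> j' z) = \<Phi> j' (\<Phi> j z))) \<and>
            (\<forall>j. n \<le> j \<and> j \<le> m \<longrightarrow> ((\<exists>z\<in>circle. \<Phi> j z = z) \<longleftrightarrow> j \<noteq> 0)) \<and>
            (\<forall>z\<in>circle. compose (map \<Phi> [1..m]) z = \<Phi> 0 z) \<and>
            (\<forall>z\<in>circle. \<Phi> 0 z = compose (map \<Phi> (rev [n..-1])) z)"
  then obtain \<Phi> :: "int \<Rightarrow> complex \<Rightarrow> complex" where
    A1: "\<forall>j. n \<le> j \<and> j \<le> m \<longrightarrow> orient_pres_homeo (\<Phi> j)" and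
    A2: "\<forall>j j'. n \<le> j \<and> j < 0 \<and> 0 < j' \<and> j' \<le> m \<longrightarrow>
               (\<forall>z\<in>circle. \<Phi> j (\<Phi> j' z) = \<Phi> j' (\<Phi> j z))" and
    A3: "\<forall>j. n \<le> j \<and> j \<le> m \<longrightarrow> ((\<exists>z\<in>circle. \<Phi> j z = z) \<longleftrightarrow> j \<noteq> 0)" and
    A4: "\<forall>z\<in>circle. compose (map \<Phi> [1..m]) z = \<Phi> 0 z" and
    A5: "\<forall>z\<in>circle. \<Phi> 0 z = compose (map \<Phi> (rev [n..-1])) z"
    by (elim exE conjE)
  have H1: "\<And>j. n \<le> j \<Longrightarrow> j \<le> m \<Longrightarrow> orient_pres_homeo (\<Phi> j)" using A1 by blast
  have H2: "\<And>j j' z. n \<le> j \<Longrightarrow> j < 0 \<Longrightarrow> 0 < j' \<Longrightarrow> j' \<le> m \<Longrightarrow> z \<in> circle \<Longrightarrow>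
           \<Phi> j (\<Phi> j' z) = \<Phi> j' (\<Phi> j z)" using A2 by blast
  have H3: "\<And>j. n \<le> j \<Longrightarrow> j \<le> m \<Longrightarrow> ((\<exists>z\<in>circle. \<Phi> j z = z) \<longleftrightarrow> j \<noteq> 0)" using A3 by blast
  have H4: "\<And>z. z \<in> circle \<Longrightarrow> compose (map \<Phi> [1..m]) z = \<Phi> 0 z" using A4 by blast
  have H5: "\<And>z. z \<in> circle \<Longrightarrow> \<Phi> 0 z = compose (map \<Phi> (rev [n..-1])) z" using A5 by blast
  have nofix0: "\<Phi> 0 w \<noteq> w" if "w \<in> circle" for w
    using H3[of 0] assms that by auto
  have homeo: "\<exists>g. homeomorphism circle circle (\<Phi> j) g" if "n \<le> j" "j \<le> m" for j
    using H1[OF that] unfolding orient_pres_homeo_def by blast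
  have maps: "\<Phi> j z \<in> circle" if "n \<le> j" "j \<le> m" "z \<in> circle" for j z
    using homeo[OF that(1,2)] that(3) unfolding homeomorphism_def by blast
  have injc: "x = y" if "n \<le> j" "j \<le> m" "x \<in> circle" "y \<in> circle" "\<Phi> j x = \<Phi> j y" for j x y
    using homeo[OF that(1,2)] that(3-5) unfolding homeomorphism_def by metis
  have contc: "continuous_on circle (\<Phi> j)" if "n \<le> j" "j \<le> m" for j
    using homeo[OF that] unfolding homeomorphism_def by blast
  define Jp where "Jp = {1..m}"
  define Jn where "Jn = {n..-1}"
  have "\<forall>j\<in>Jp. \<exists>Q. (\<forall>t. \<Phi> j (cis (2*pi*t)) = cis (2*pi*Q t)) \<and> strict_mono Q \<and>
             (\<forall>t. Q (t+1) = Q t + 1) \<and> surj Q \<and> (\<exists>x. Q x = x)"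
  proof
    fix j assume j: "j \<in> Jp"
    then have jr: "n \<le> j" "j \<le> m" "j \<noteq> 0" using assms by (auto simp: Jp_def)
    then obtain z where "z \<in> circle" "\<Phi> j z = z" using H3 by blast
    then show "\<exists>Q. (\<forall>t. \<Phi> j (cis (2*pi*t)) = cis (2*pi*Q t)) \<and> strict_mono Q \<and>
             (\<forall>t. Q (t+1) = Q t + 1) \<and> surj Q \<and> (\<exists>x. Q x = x)"
      using lift_exists H1[OF jr(1,2)] by blast
  qed
  from bchoice[OF this] obtain P where P: "\<forall>j\<in>Jp. (\<forall>t. \<Phi> j (cis (2*pi*t)) = cis (2*pi*P j t)) \<and> strict_mono (P j) \<and>
             (\<forall>t. P j (t+1) = P j t + 1) \<and> surj (P j) \<and> (\<exists>x. P j x = x)"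
    by blast
  have hyp: "\<forall>j\<in>Jp. strict_mono (P j) \<and> surj (P j) \<and> (\<forall>t. P j (t+1) = P j t + 1) \<and> (\<exists>x. P j x = x)"
    using P by blast
  have nocommon: "\<not> (\<exists>a. \<forall>j\<in>Jp. P j a = a)"
  proof
    assume "\<exists>a. \<forall>j\<in>Jp. P j a = a"
    then obtain a where a: "\<forall>j\<in>Jp. P j a = a" by blast
    define w where "w = cis (2*pi*a)"
    have "\<forall>f\<in>set (map \<Phi> [1..m]). f w = w"
    proof
      fix f assume "f \<in> set (map \<Phi> [1..m])"
      then have "f \<in> \<Phi> ` Jp" unfolding Jp_def by (simp only: set_map set_upto)
      then obtain j where j: "j \<in> Jp" "f = \<Phi> j" by blast
      have "\<Phi> j (cis (2*pi*a)) = cis (2*pi*P j a)" using P j(1) by blast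
      then show "f w = w" using a j unfolding w_def by simp
    qed
    then have "compose (map \<Phi> [1..m]) w = w" by (rule compose_fix)
    then show False using H4[of w] nofix0[of w] cis_in unfolding w_def by simp
  qed
  define C where "C = (\<lambda>i. {t. \<Phi> i (cis (2*pi*t)) = cis (2*pi*t)})"
  have Cinv: "invs Jp P (C i)" if i: "i \<in> Jn" for i
  proof -
    have ir: "n \<le> i" "i \<le> m" "i < 0" using i assms by (auto simp: Jn_def)
    have "continuous_on UNIV (\<lambda>t. \<Phi> i (cis (2*pi*t)))"
      by (rule continuous_on_compose2[OF contc[OF ir(1,2)]]) (auto intro!: continuous_intros simp: cis_in)
    then have cl: "closed (C i)" unfolding C_def
      by (intro closed_Collect_eq) (auto intro!: continuous_intros)
    obtain z where z: "z \<in> circle" "\<Phi> i z = z" using H3[OF ir(1,2)] ir(3) by blast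
    obtain t where "z = cis (2*pi*t)" using circle_cis z(1) by blast
    then have ne: "C i \<noteq> {}" using z unfolding C_def by blast
    have sh: "\<forall>t n. t \<in> C i \<longrightarrow> t + of_int n \<in> C i" unfolding C_def by (simp add: cis_shift)
    have pinv: "\<forall>j\<in>Jp. \<forall>t. P j t \<in> C i \<longleftrightarrow> t \<in> C i"
    proof (intro ballI allI)
      fix j t assume j: "j \<in> Jp"
      have jr: "n \<le> j" "j \<le> m" "0 < j" using j assms by (auto simp: Jp_def)
      define w where "w = cis (2*pi*t)"
      have w: "w \<in> circle" by (simp add: w_def cis_in)
      have e: "cis (2*pi*P j t) = \<Phi> j w" using P j unfolding w_def by simp
      have "P j t \<in> C i \<longleftrightarrow> \<Phi> i (\<Phi> j w) = \<Phi> j w" unfolding C_def using e by simp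
      also have "\<dots> \<longleftrightarrow> \<Phi> j (\<Phi> i w) = \<Phi> j w" using H2[OF ir(1,3) jr(3,2) w] by simp
      also have "\<dots> \<longleftrightarrow> \<Phi> i w = w" using injc[OF jr(1,2) maps[OF ir(1,2) w] w] by auto
      also have "\<dots> \<longleftrightarrow> t \<in> C i" unfolding C_def w_def by simp
      finally show "P j t \<in> C i \<longleftrightarrow> t \<in> C i" .
    qed
    show ?thesis unfolding invs_def using cl ne sh pinv by blast
  qed
  have big: "finite I \<Longrightarrow> I \<noteq> {} \<Longrightarrow> I \<subseteq> Jn \<Longrightarrow> invs Jp P (\<Inter>i\<in>I. C i)" for I
  proof (induction I rule: finite_ne_induct)
    case (singleton x)
    then show ?case using Cinv by simp
  next
    case (insert x F)
    have X: "invs Jp P (C x)" using Cinv insert by blast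
    have Y: "invs Jp P (\<Inter>i\<in>F. C i)" using insert by blast
    have "C x \<inter> (\<Inter>i\<in>F. C i) \<noteq> {}"
    proof
      assume "C x \<inter> (\<Inter>i\<in>F. C i) = {}"
      then show False using core[OF hyp X Y] nocommon by blast
    qed
    then show ?case using invs_Int[OF X Y] by simp
  qed
  have fJn: "finite Jn" by (simp add: Jn_def)
  have neJn: "Jn \<noteq> {}" using assms(1) by (simp add: Jn_def)
  have "invs Jp P (\<Inter>i\<in>Jn. C i)" using big[OF fJn neJn] by blast
  then have "(\<Inter>i\<in>Jn. C i) \<noteq> {}" unfolding invs_def by (elim conjE)
  then obtain b where b: "\<forall>i\<in>Jn. b \<in> C i" by blast
  define w where "w = cis (2*pi*b)"
  have "\<forall>f\<in>set (map \<Phi> (rev [n..-1])). f w = w"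
  proof
    fix f assume "f \<in> set (map \<Phi> (rev [n..-1]))"
    then have "f \<in> \<Phi> ` Jn" unfolding Jn_def by (simp only: set_map set_rev set_upto)
    then obtain i where i: "i \<in> Jn" "f = \<Phi> i" by blast
    have "b \<in> C i" using b i(1) by blast
    then show "f w = w" using i(2) unfolding C_def w_def by simp
  qed
  then have "compose (map \<Phi> (rev [n..-1])) w = w" by (rule compose_fix)
  then show False using H5[of w] nofix0[of w] cis_in unfolding w_def by simp
qed

end
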